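(* Let \[ Q(\tau)=\frac1{R_gT_\infty}\Big(\frac{4\pi}3-\frac{8(\gamma-1)}{\pi\gamma}\sum_{j\ge1}\frac{\tau}{j^2(\pi^2\bar\kappa j^2+\tau)}\Big)\Big(\rho_lR_*\tau^2+\frac{4\mu_l}{R_*}\tau-\frac{2\sigma}{R_*^2}\Big)+4\pi\frac{\rho_*}{R_*}, \] a meromorphic function of $\tau\in\mathbb C$. There exists $\phi\in(\pi/2,\pi)$ such that all roots of $Q$ lie in the sector $S_\phi=\{\tau\in\mathbb C:\phi\le|\arg\tau|\le\pi\}$.
   Context: Parameters: $\kappa>0$, $\gamma>1$, $c_v>0$, $R_g>0$ with $c_p=\gamma c_v=c_v+R_g$; $T_\infty>0$, $p_{\infty,*}>0$, $\sigma>0$, $\mu_l\ge0$, $\rho_l>0$; $\rho_*,R_*>0$ with $R_gT_\infty\rho_*=p_{\infty,*}+2\sigma/R_*$; $\bar\kappa=\kappa/(c_p\rho_*R_*^2)$. *)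

theory Defs
  imports "HOL-Analysis.Analysis"
begin

definition bubble_series :: "real \<Rightarrow> complex \<Rightarrow> complex" where
  "bubble_series kbar \<tau> =
     (\<Sum>j. \<tau> / (of_nat (Suc j) ^ 2 *
        (of_real (pi ^ 2 * kbar) * of_nat (Suc j) ^ 2 + \<tau>)))"

definition bubble_poles :: "real \<Rightarrow> complex set" where
  "bubble_poles kbar = {- of_real (pi ^ 2 * kbar * (real j) ^ 2) | j. j \<ge> 1}"

definition bubbleQ ::
  "real \<Rightarrow> real \<Rightarrow> real \<Rightarrow> real \<Rightarrow> real \<Rightarrow> real \<Rightarrow> real \<Rightarrow> real \<Rightarrow> real
     \<Rightarrow> complex \<Rightarrow> complex" where
  "bubbleQ Rg Tinf \<gamma> kbar \<rho>l \<mu>l \<sigma> Rs \<rho>s \<tau> =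
     of_real (1 / (Rg * Tinf)) *
       (of_real (4 * pi / 3) - of_real (8 * (\<gamma> - 1) / (pi * \<gamma>)) * bubble_series kbar \<tau>) *
       (of_real (\<rho>l * Rs) * \<tau> ^ 2 + of_real (4 * \<mu>l / Rs) * \<tau> - of_real (2 * \<sigma> / Rs ^ 2))
     + of_real (4 * pi * \<rho>s / Rs)"

end

theory Submission
  imports Defs
begin


definition uu :: "real \<Rightarrow> complex \<Rightarrow> nat \<Rightarrow> complex" where
  "uu a \<tau> j = of_real a / (of_real a * of_nat (Suc j) ^ 2 + \<tau>)"

definition WW :: "real \<Rightarrow> complex \<Rightarrow> nat \<Rightarrow> real" where
  "WW a \<tau> j = a / ((a * real (Suc j) ^ 2 + Re \<tau>)^2 + (Im \<tau>)^2)"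

lemma den_bound:
  assumes "a > 0" "- Re \<tau> \<le> \<bar>Im \<tau>\<bar>"
  shows "(a * real (Suc j) ^ 2 + Re \<tau>)^2 + (Im \<tau>)^2 \<ge> (a * real (Suc j) ^ 2)^2 / 2"
proof -
  define n where "n = a * real (Suc j) ^ 2"
  define x where "x = Re \<tau>"
  define y where "y = Im \<tau>"
  have n: "n > 0" using assms by (simp add: n_def)
  have "(n + x)^2 + y^2 \<ge> n^2/2"
  proof (cases "x \<ge> 0")
    case True
    have "n^2 \<le> (n+x)^2" using True n by (intro power_mono) auto
    moreover have "n^2/2 \<le> n^2" by simp
    ultimately show ?thesis using zero_le_power2[of y] by linarith
  next
    case False
    have "-x \<le> \<bar>y\<bar>" using assms(2) by (simp add: x_def y_def)
    hence "(-x)^2 \<le> \<bar>y\<bar>^2" using False by (intro power_mono) auto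
    hence yy: "x^2 \<le> y^2" by simp
    have "(n+x)^2 + x^2 = n^2/2 + (n+2*x)^2/2" by (simp add: power2_eq_square field_simps)
    thus ?thesis using yy zero_le_power2[of "n+2*x"] by linarith
  qed
  thus ?thesis by (simp add: n_def x_def y_def)
qed

lemma inv_sq_summable: "summable (\<lambda>j. 1 / real (Suc j) ^ 2)"
  using inverse_squares_sums sums_summable by (simp add: add.commute)

lemma uu_Re: "Re (uu a \<tau> j) = (a * real (Suc j) ^ 2 + Re \<tau>) * WW a \<tau> j"
  unfolding uu_def WW_def by (simp add: Re_divide)

lemma uu_Im: "Im (uu a \<tau> j) = - Im \<tau> * WW a \<tau> j"
  unfolding uu_def WW_def by (simp add: Im_divide)

lemma w_norm:
  assumes "a > 0" "- Re \<tau> \<le> \<bar>Im \<tau>\<bar>"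
  shows "cmod (of_real a * of_nat (Suc j) ^ 2 + \<tau>) \<ge> a * real (Suc j) ^ 2 / 2"
proof -
  let ?w = "of_real a * of_nat (Suc j) ^ 2 + \<tau>"
  have re: "Re ?w = a * real (Suc j) ^ 2 + Re \<tau>" and im: "Im ?w = Im \<tau>"
    by (simp_all del: of_nat_Suc)
  have d: "(a * real (Suc j) ^ 2)^2 / 2 \<le> (a * real (Suc j) ^ 2 + Re \<tau>)^2 + (Im \<tau>)^2"
    by (rule den_bound[OF assms])
  have e: "(a * real (Suc j) ^ 2 / 2)^2 = (a * real (Suc j) ^ 2)^2 / 4"
    by (simp add: power_divide)
  have "(a * real (Suc j) ^ 2 / 2)^2 \<le> (Re ?w)^2 + (Im ?w)^2"
    unfolding re im e using d zero_le_power2[of "a * real (Suc j) ^ 2"] by linarith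
  hence "sqrt ((a * real (Suc j) ^ 2 / 2)^2) \<le> cmod ?w"
    unfolding cmod_def using real_sqrt_le_mono by blast
  thus ?thesis using assms(1) by simp
qed

lemma uu_norm:
  assumes "a > 0" "- Re \<tau> \<le> \<bar>Im \<tau>\<bar>"
  shows "cmod (uu a \<tau> j) \<le> 2 / real (Suc j) ^ 2"
proof -
  have wn: "cmod (of_real a * of_nat (Suc j) ^ 2 + \<tau>) \<ge> a * real (Suc j) ^ 2 / 2"
    by (rule w_norm[OF assms])
  have pos: "a * real (Suc j) ^ 2 / 2 > 0" using assms by simp
  have wpos: "cmod (of_real a * of_nat (Suc j) ^ 2 + \<tau>) > 0" using wn pos by linarith
  have "cmod (uu a \<tau> j) = a / cmod (of_real a * of_nat (Suc j) ^ 2 + \<tau>)"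
    unfolding uu_def using assms(1) by (simp add: norm_divide)
  also have "\<dots> \<le> a / (a * real (Suc j) ^ 2 / 2)"
    by (rule divide_left_mono[OF wn _ mult_pos_pos[OF wpos pos]]) (use assms in auto)
  also have "\<dots> = 2 / real (Suc j) ^ 2" using assms by (simp add: field_simps)
  finally show ?thesis .
qed

lemma uu_summable:
  assumes "a > 0" "- Re \<tau> \<le> \<bar>Im \<tau>\<bar>"
  shows "summable (uu a \<tau>)"
proof (rule summable_comparison_test)
  show "\<exists>N. \<forall>n\<ge>N. norm (uu a \<tau> n) \<le> 2 * (1 / real (Suc n) ^ 2)"
    using uu_norm[OF assms] by auto
  show "summable (\<lambda>n. 2 * (1 / real (Suc n) ^ 2))"
    by (intro summable_mult inv_sq_summable)
qed

lemma WW_nonneg: "a > 0 \<Longrightarrow> WW a \<tau> j \<ge> 0"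
  unfolding WW_def by simp

lemma aux: "a > 0 \<Longrightarrow> m > 0 \<Longrightarrow> a / ((a * m ^ 2)^2 / 2) = (2 / a) * (1 / (m ^ 2 * m ^ 2))"
  for a m :: real by (simp add: field_simps power2_eq_square)

lemma aux2: "(A::real) \<ge> 1 \<Longrightarrow> 1 / (A * A) \<le> 1 / A"
proof -
  assume A: "A \<ge> 1"
  have "A \<le> A * A" using mult_left_mono[of 1 A A] A by simp
  moreover have "0 < (A * A) * A" using A by simp
  ultimately show ?thesis by (intro divide_left_mono) auto
qed

lemma WW_summable:
  assumes "a > 0" "- Re \<tau> \<le> \<bar>Im \<tau>\<bar>"
  shows "summable (WW a \<tau>)"
proof (rule summable_comparison_test)
  have "norm (WW a \<tau> n) \<le> (2 / a) * (1 / real (Suc n) ^ 2)" for n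
  proof -
    have d: "(a * real (Suc n) ^ 2)^2 / 2 \<le> (a * real (Suc n) ^ 2 + Re \<tau>)^2 + (Im \<tau>)^2"
      by (rule den_bound[OF assms])
    have p: "(a * real (Suc n) ^ 2)^2 / 2 > 0" using assms by simp
    have dp: "(a * real (Suc n) ^ 2 + Re \<tau>)^2 + (Im \<tau>)^2 > 0" using d p by linarith
    have "norm (WW a \<tau> n) = WW a \<tau> n" using WW_nonneg[OF assms(1)] by simp
    also have "\<dots> \<le> a / ((a * real (Suc n) ^ 2)^2 / 2)"
      unfolding WW_def by (rule divide_left_mono[OF d _ mult_pos_pos[OF dp p]]) (use assms in auto)
    also have "\<dots> = (2 / a) * (1 / (real (Suc n) ^ 2 * real (Suc n) ^ 2))"
      using aux[OF assms(1), of "real (Suc n)"] by simp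
    also have "\<dots> \<le> (2 / a) * (1 / real (Suc n) ^ 2)"
    proof -
      have m1: "real (Suc n)^2 \<ge> 1" using one_le_power[of "real (Suc n)" 2] by simp
      hence "1 / (real (Suc n) ^ 2 * real (Suc n) ^ 2) \<le> 1 / real (Suc n) ^ 2"
        by (rule aux2)
      thus ?thesis by (rule mult_left_mono) (use assms in simp)
    qed
    finally show ?thesis .
  qed
  thus "\<exists>N. \<forall>n\<ge>N. norm (WW a \<tau> n) \<le> (2 / a) * (1 / real (Suc n) ^ 2)" by auto
  show "summable (\<lambda>n. (2 / a) * (1 / real (Suc n) ^ 2))"
    by (intro summable_mult inv_sq_summable)
qed

lemma series_eq:
  assumes "kbar > 0" "- Re \<tau> \<le> \<bar>Im \<tau>\<bar>"
  shows "bubble_series kbar \<tau> = of_real (pi^2/6) - suminf (uu (pi^2 * kbar) \<tau>)"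
proof -
  define a where "a = pi^2 * kbar"
  have a: "a > 0" using assms by (simp add: a_def)
  have s1: "(\<lambda>j. of_real (1 / real (Suc j) ^ 2) :: complex) sums of_real (pi^2/6)"
  proof -
    have "(\<lambda>n. 1 / (real n + 1)^2) = (\<lambda>j. 1 / real (Suc j) ^ 2)" by (simp add: add.commute)
    hence "(\<lambda>j. 1 / real (Suc j) ^ 2) sums (pi^2/6)" using inverse_squares_sums by simp
    from sums_of_real[OF this] show ?thesis by (simp only: o_def)
  qed
  have s2: "uu a \<tau> sums suminf (uu a \<tau>)"
    using uu_summable[OF a assms(2)] by (simp add: summable_sums)
  have s3: "(\<lambda>j. of_real (1 / real (Suc j) ^ 2) - uu a \<tau> j) sums
      (of_real (pi^2/6) - suminf (uu a \<tau>))"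
    by (rule sums_diff[OF s1 s2])
  have eq: "of_real (1 / real (Suc j) ^ 2) - uu a \<tau> j =
      \<tau> / (of_nat (Suc j) ^ 2 * (of_real (pi ^ 2 * kbar) * of_nat (Suc j) ^ 2 + \<tau>))" for j
  proof -
    have nz: "of_real a * of_nat (Suc j) ^ 2 + \<tau> \<noteq> 0"
    proof -
      have "a * real (Suc j) ^ 2 / 2 > 0" using a by simp
      hence "cmod (of_real a * of_nat (Suc j) ^ 2 + \<tau>) > 0"
        using w_norm[OF a assms(2), of j] by linarith
      thus ?thesis by auto
    qed
    have nz2: "(of_nat (Suc j) :: complex) \<noteq> 0" by (simp del: of_nat_Suc)
    show ?thesis unfolding uu_def a_def[symmetric] using nz nz2
      by (simp del: of_nat_Suc add: field_simps)
  qed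
  have fe: "(\<lambda>j. of_real (1 / real (Suc j) ^ 2) - uu a \<tau> j) =
      (\<lambda>j. \<tau> / (of_nat (Suc j) ^ 2 * (of_real (pi ^ 2 * kbar) * of_nat (Suc j) ^ 2 + \<tau>)))"
    by (rule ext) (rule eq)
  from s3[unfolded fe] show ?thesis unfolding bubble_series_def a_def
    by (rule sums_unique[symmetric])
qed

lemma inv_sq_suminf: "(\<Sum>j. 1 / real (Suc j) ^ 2) = pi^2/6"
proof -
  have "(\<lambda>n. 1 / (real n + 1)^2) = (\<lambda>j. 1 / real (Suc j) ^ 2)" by (simp add: add.commute)
  hence "(\<lambda>j. 1 / real (Suc j) ^ 2) sums (pi^2/6)" using inverse_squares_sums by simp
  thus ?thesis by (simp add: sums_iff)
qed

lemma U_props: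
  assumes a: "a > 0" and R: "- Re \<tau> \<le> \<bar>Im \<tau>\<bar>"
  shows "Im (suminf (uu a \<tau>)) = - Im \<tau> * suminf (WW a \<tau>)"
    and "Re (suminf (uu a \<tau>)) + \<bar>Im (suminf (uu a \<tau>))\<bar> \<ge> 0"
    and "cmod (suminf (uu a \<tau>)) \<le> pi^2/3"
    and "suminf (WW a \<tau>) \<ge> a / ((a + Re \<tau>)^2 + (Im \<tau>)^2)"
    and "suminf (WW a \<tau>) \<ge> 0"
proof -
  have su: "summable (uu a \<tau>)" by (rule uu_summable[OF a R])
  have sw: "summable (WW a \<tau>)" by (rule WW_summable[OF a R])
  have wn: "\<And>j. WW a \<tau> j \<ge> 0" by (rule WW_nonneg[OF a])
  have imU: "Im (suminf (uu a \<tau>)) = (\<Sum>j. Im (uu a \<tau> j))"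
    using Im_suminf[OF su] by simp
  have reU: "Re (suminf (uu a \<tau>)) = (\<Sum>j. Re (uu a \<tau> j))"
    using Re_suminf[OF su] by simp
  show i: "Im (suminf (uu a \<tau>)) = - Im \<tau> * suminf (WW a \<tau>)"
    unfolding imU uu_Im using suminf_mult[OF sw, of "- Im \<tau>"] by simp
  show w0: "suminf (WW a \<tau>) \<ge> 0" by (rule suminf_nonneg[OF sw wn])
  have s1: "summable (\<lambda>j. (a * real (Suc j) ^ 2 + Re \<tau>) * WW a \<tau> j)"
    using summable_Re[OF su] by (simp add: uu_Re)
  have s2: "summable (\<lambda>j. \<bar>Im \<tau>\<bar> * WW a \<tau> j)" by (rule summable_mult[OF sw])
  have "Re (suminf (uu a \<tau>)) + \<bar>Im (suminf (uu a \<tau>))\<bar>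
        = (\<Sum>j. (a * real (Suc j) ^ 2 + Re \<tau>) * WW a \<tau> j) + (\<Sum>j. \<bar>Im \<tau>\<bar> * WW a \<tau> j)"
    unfolding reU uu_Re i using w0 suminf_mult[OF sw, of "\<bar>Im \<tau>\<bar>"]
    by (simp add: abs_mult)
  also have "\<dots> = (\<Sum>j. (a * real (Suc j) ^ 2 + Re \<tau>) * WW a \<tau> j + \<bar>Im \<tau>\<bar> * WW a \<tau> j)"
    using suminf_add[OF s1 s2] by simp
  also have "\<dots> \<ge> 0"
  proof (rule suminf_nonneg)
    show "summable (\<lambda>j. (a * real (Suc j) ^ 2 + Re \<tau>) * WW a \<tau> j + \<bar>Im \<tau>\<bar> * WW a \<tau> j)"
      by (rule summable_add[OF s1 s2])
    fix j
    have "a * real (Suc j) ^ 2 > 0" using a by simp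
    hence "a * real (Suc j) ^ 2 + Re \<tau> + \<bar>Im \<tau>\<bar> \<ge> 0" using R by linarith
    hence "(a * real (Suc j) ^ 2 + Re \<tau> + \<bar>Im \<tau>\<bar>) * WW a \<tau> j \<ge> 0" using wn[of j] by simp
    thus "0 \<le> (a * real (Suc j) ^ 2 + Re \<tau>) * WW a \<tau> j + \<bar>Im \<tau>\<bar> * WW a \<tau> j"
      by (simp add: algebra_simps)
  qed
  finally show "Re (suminf (uu a \<tau>)) + \<bar>Im (suminf (uu a \<tau>))\<bar> \<ge> 0" .
  have "cmod (suminf (uu a \<tau>)) \<le> (\<Sum>j. 2 * (1 / real (Suc j) ^ 2))"
  proof (rule norm_suminf_le)
    show "summable (\<lambda>j. 2 * (1 / real (Suc j) ^ 2))" by (intro summable_mult inv_sq_summable)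
    fix j show "cmod (uu a \<tau> j) \<le> 2 * (1 / real (Suc j) ^ 2)" using uu_norm[OF a R, of j] by simp
  qed
  also have "\<dots> = 2 * (pi^2/6)" using suminf_mult[OF inv_sq_summable, of 2] inv_sq_suminf by simp
  finally show "cmod (suminf (uu a \<tau>)) \<le> pi^2/3" by simp
  have "sum (WW a \<tau>) {0} \<le> suminf (WW a \<tau>)"
    by (rule sum_le_suminf[OF sw]) (use wn in auto)
  thus "suminf (WW a \<tau>) \<ge> a / ((a + Re \<tau>)^2 + (Im \<tau>)^2)" by (simp add: WW_def)
qed

lemma U_real:
  assumes a: "a > 0" and y: "Im \<tau> = 0" and x: "Re \<tau> \<ge> 0"
  shows "Re (suminf (uu a \<tau>)) \<le> pi^2/6"
proof -
  have R: "- Re \<tau> \<le> \<bar>Im \<tau>\<bar>" using x y by simp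
  have su: "summable (uu a \<tau>)" by (rule uu_summable[OF a R])
  have "Re (suminf (uu a \<tau>)) = (\<Sum>j. Re (uu a \<tau> j))"
    using Re_suminf[OF su] by simp
  also have "\<dots> \<le> (\<Sum>j. 1 / real (Suc j) ^ 2)"
  proof (rule suminf_le)
    show "summable (\<lambda>j. Re (uu a \<tau> j))" by (rule summable_Re[OF su])
    show "summable (\<lambda>j. 1 / real (Suc j) ^ 2)" by (rule inv_sq_summable)
    fix j
    define m where "m = a * real (Suc j) ^ 2"
    have m: "m > 0" using a by (simp add: m_def)
    have "Re (uu a \<tau> j) = (m + Re \<tau>) * (a / (m + Re \<tau>)^2)"
      unfolding uu_Re WW_def m_def using y by simp
    also have "\<dots> = a / (m + Re \<tau>)" using m x by (simp add: power2_eq_square)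
    also have "\<dots> \<le> a / m" using m x a by (intro divide_left_mono) auto
    also have "\<dots> = 1 / real (Suc j) ^ 2" using a by (simp add: m_def)
    finally show "Re (uu a \<tau> j) \<le> 1 / real (Suc j) ^ 2" .
  qed
  finally show ?thesis using inv_sq_suminf by simp
qed



lemma core:
  fixes \<tau> F U :: complex and finf c rho b d A a W B :: real
  assumes F: "F = of_real finf + of_real c * U"
    and pos: "finf > 0" "c > 0" "rho > 0" "b \<ge> 0" "d > 0" "A > 0" "a > 0"
    and eq: "F * (of_real rho * \<tau>^2 + of_real b * \<tau> - of_real d) = - of_real A"
    and U1: "Re U + \<bar>Im U\<bar> \<ge> 0"
    and U2: "cmod U \<le> B"
    and U3: "Im U = - Im \<tau> * W"
    and U4: "W \<ge> a / ((a + Re \<tau>)^2 + (Im \<tau>)^2)"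
    and y0: "Im \<tau> \<noteq> 0"
  shows "Re \<tau> \<le> - (A * c * a / (2 * rho * (a + max 1 ((2*A/finf + b + d)/rho))^2 * (finf + c*B)^2))
         \<and> cmod \<tau> \<le> max 1 ((2*A/finf + b + d)/rho)"
proof -
  define M where "M = max 1 ((2*A/finf + b + d)/rho)"
  define FU where "FU = finf + c*B"
  define P where "P = of_real rho * \<tau>^2 + of_real b * \<tau> - of_real d"
  define x where "x = Re \<tau>"
  define y where "y = Im \<tau>"
  define t where "t = cmod \<tau>"
  have t0: "t \<ge> 0" by (simp add: t_def)
  have txy: "t^2 = x^2 + y^2" unfolding t_def x_def y_def by (simp add: cmod_power2)
  have ReF: "Re F = finf + c * Re U" and ImF: "Im F = c * Im U" using F by simp_all
  have "Re F + \<bar>Im F\<bar> \<ge> finf"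
  proof -
    have "c * (Re U + \<bar>Im U\<bar>) \<ge> 0" using U1 pos by simp
    thus ?thesis unfolding ReF ImF using pos by (simp add: abs_mult algebra_simps)
  qed
  moreover have "Re F \<le> cmod F" "\<bar>Im F\<bar> \<le> cmod F"
    using abs_Re_le_cmod[of F] abs_Im_le_cmod[of F] by auto
  ultimately have F1: "cmod F \<ge> finf / 2" by linarith
  have F2: "cmod F \<le> FU"
  proof -
    have "cmod F \<le> cmod (of_real finf :: complex) + cmod (of_real c * U)"
      unfolding F by (rule norm_triangle_ineq)
    also have "\<dots> = finf + c * cmod U" using pos by (simp add: norm_mult)
    also have "\<dots> \<le> finf + c * B" using U2 pos by simp
    finally show ?thesis by (simp add: FU_def)
  qed
  have FP: "cmod F * cmod P = A" using arg_cong[OF eq, of cmod] pos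
    by (simp add: P_def norm_mult)
  have Pb: "cmod P \<le> 2 * A / finf"
  proof -
    have "cmod P * (finf / 2) \<le> cmod P * cmod F" by (rule mult_left_mono[OF F1]) simp
    hence "cmod P * finf \<le> 2 * A" using FP by (simp add: mult.commute)
    thus ?thesis using pos by (simp add: field_simps)
  qed
  have tq: "rho * t^2 \<le> cmod P + b * t + d"
  proof -
    have "of_real rho * \<tau>^2 = P - of_real b * \<tau> + of_real d" by (simp add: P_def)
    hence "rho * t^2 = cmod (P - of_real b * \<tau> + of_real d)"
      using arg_cong[of _ _ cmod] pos by (metis abs_of_pos norm_mult norm_of_real norm_power t_def)
    also have "\<dots> \<le> cmod P + cmod (of_real b * \<tau>) + cmod (of_real d :: complex)"
      by (smt (verit) norm_triangle_ineq4 norm_triangle_ineq)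
    also have "\<dots> = cmod P + b * t + d" using pos by (simp add: norm_mult t_def)
    finally show ?thesis .
  qed
  have tM: "t \<le> M"
  proof (cases "t \<le> 1")
    case True thus ?thesis by (simp add: M_def)
  next
    case False
    have "rho * t^2 \<le> 2 * A / finf + b * t + d" using tq Pb by linarith
    also have "\<dots> \<le> (2 * A / finf + b + d) * t"
    proof -
      have g: "0 \<le> 2 * A / finf" using pos by simp
      have "2 * A / finf * 1 \<le> 2 * A / finf * t" by (rule mult_left_mono) (use False g in auto)
      moreover have "d * 1 \<le> d * t" by (rule mult_left_mono) (use False pos in auto)
      ultimately show ?thesis by (simp add: algebra_simps)
    qed
    finally have "rho * t * t \<le> (2 * A / finf + b + d) * t" by (simp add: power2_eq_square mult.assoc)
    hence "rho * t \<le> 2 * A / finf + b + d" using False by simp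
    hence "t \<le> (2 * A / finf + b + d) / rho" using pos by (simp add: field_simps)
    thus ?thesis by (simp add: M_def)
  qed
  have M1: "M \<ge> 1" by (simp add: M_def)
  have Fpos: "cmod F > 0" using F1 pos by linarith
  have ImEq: "Im P * (cmod F)^2 = A * Im F"
  proof -
    have "P * F * cnj F = - of_real A * cnj F" using eq by (simp add: P_def mult.commute)
    hence "P * (F * cnj F) = - of_real A * cnj F" by (simp add: mult.assoc)
    hence "P * of_real ((cmod F)^2) = - of_real A * cnj F"
      by (simp only: complex_norm_square)
    from arg_cong[OF this, of Im] show ?thesis by simp
  qed
  have ImP: "Im P = y * (2 * rho * x + b)"
    unfolding P_def x_def y_def by (simp add: power2_eq_square algebra_simps)
  have "y * ((2 * rho * x + b) * (cmod F)^2) = y * (- A * c * W)"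
    using ImEq unfolding ImP ImF U3 y_def[symmetric] by (simp add: algebra_simps)
  hence key: "(2 * rho * x + b) * (cmod F)^2 = - A * c * W"
    using y0 unfolding y_def by (metis mult_left_cancel)
  have den: "(a + x)^2 + y^2 \<le> (a + M)^2"
  proof -
    have "x \<le> t" using abs_Re_le_cmod[of \<tau>] by (simp add: x_def t_def)
    have "(a + x)^2 + y^2 = a^2 + 2*a*x + t^2" using txy by (simp add: power2_eq_square algebra_simps)
    also have "\<dots> \<le> a^2 + 2*a*t + t^2" using \<open>x \<le> t\<close> pos by simp
    also have "\<dots> = (a + t)^2" by (simp add: power2_eq_square algebra_simps)
    also have "\<dots> \<le> (a + M)^2" using tM t0 pos by (intro power_mono) auto
    finally show ?thesis .
  qed
  have denpos: "(a + x)^2 + y^2 > 0" using y0 by (simp add: y_def add_nonneg_pos)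
  have aMpos: "(a + M)^2 > 0" using M1 pos by simp
  have W1: "W \<ge> a / (a + M)^2"
  proof -
    have "a / (a + M)^2 \<le> a / ((a + x)^2 + y^2)"
      by (rule divide_left_mono[OF den _ mult_pos_pos[OF aMpos denpos]]) (use pos in auto)
    thus ?thesis using U4 by (simp add: x_def y_def)
  qed
  have Wpos: "W > 0" using W1 aMpos pos by (smt (verit) divide_pos_pos)
  have "- 2 * rho * x * (cmod F)^2 = b * (cmod F)^2 + A * c * W"
    using key by (simp add: algebra_simps)
  hence lhs: "- 2 * rho * x * (cmod F)^2 \<ge> A * c * W"
    using pos by simp
  have AcW: "A * c * W \<ge> A * c * (a / (a + M)^2)" by (rule mult_left_mono[OF W1]) (use pos in simp)
  have xneg: "x < 0"
  proof (rule ccontr)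
    assume "\<not> x < 0"
    hence "- 2 * rho * x * (cmod F)^2 \<le> 0" using pos by (simp add: mult_nonneg_nonneg)
    moreover have "A * c * W > 0" using pos Wpos by simp
    ultimately show False using lhs by linarith
  qed
  have FF: "(cmod F)^2 \<le> FU^2" using F2 Fpos by (intro power_mono) auto
  have "- 2 * rho * x * FU^2 \<ge> - 2 * rho * x * (cmod F)^2"
  proof -
    have "rho * x \<le> 0" using xneg pos mult_pos_neg[of rho x] by linarith
    thus ?thesis using FF by (intro mult_left_mono) auto
  qed
  hence main: "- 2 * rho * x * FU^2 \<ge> A * c * a / (a + M)^2" using lhs AcW by simp
  have FUpos: "FU > 0" using F2 Fpos by linarith
  have "A * c * a / (2 * rho * (a + M)^2 * FU^2) \<le> - x"
  proof -
    have "A * c * a / (2 * rho * (a + M)^2 * FU^2) = (A * c * a / (a + M)^2) / (2 * rho * FU^2)"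
      by (simp add: field_simps)
    also have "\<dots> \<le> (- 2 * rho * x * FU^2) / (2 * rho * FU^2)"
      using main pos FUpos by (intro divide_right_mono) auto
    also have "\<dots> = - x" using pos FUpos by (simp add: field_simps)
    finally show ?thesis .
  qed
  thus ?thesis using tM unfolding M_def FU_def x_def t_def by simp
qed



lemma arg_bound:
  fixes z :: complex and K :: real
  assumes K: "K > 0" and x: "Re z < 0" and y: "\<bar>Im z\<bar> \<le> K * (- Re z)"
  shows "pi - arctan K \<le> \<bar>Arg z\<bar>"
proof -
  have z0: "z \<noteq> 0" using x by auto
  have A: "Arg z = Im (Ln z)" by (rule Arg_eq_Im_Ln[OF z0])
  show ?thesis
  proof (cases "Im z \<ge> 0")
    case True
    have "Im z / Re z \<ge> -K"
    proof -
      have "Im z \<le> K * (- Re z)" using y True by simp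
      thus ?thesis using x by (simp add: le_divide_eq)
    qed
    hence "arctan (Im z / Re z) \<ge> - arctan K" by (simp add: arctan_le_iff arctan_minus[symmetric])
    moreover have "Arg z = arctan (Im z / Re z) + pi" using A Im_Ln_eq[OF z0] x True by simp
    ultimately show ?thesis by simp
  next
    case False
    have "Im z / Re z \<le> K"
    proof -
      have "- Im z \<le> K * (- Re z)" using y False by simp
      thus ?thesis using x by (simp add: divide_le_eq)
    qed
    hence a: "arctan (Im z / Re z) \<le> arctan K" by (simp add: arctan_le_iff)
    have "Arg z = arctan (Im z / Re z) - pi" using A Im_Ln_eq[OF z0] x False by simp
    moreover have "arctan K < pi/2" by (rule arctan_ubound)
    ultimately show ?thesis using a by simp
  qed
qed


theorem lemmaB2:
  fixes \<kappa> \<gamma> cv Rg cp Tinf pinf \<sigma> \<mu>l \<rho>l \<rho>s Rs :: real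
  assumes "\<kappa> > 0" and "\<gamma> > 1" and "cv > 0" and "Rg > 0"
    and "cp = \<gamma> * cv" and "cp = cv + Rg"
    and "Tinf > 0" and "pinf > 0" and "\<sigma> > 0" and "\<mu>l \<ge> 0" and "\<rho>l > 0"
    and "\<rho>s > 0" and "Rs > 0"
    and "Rg * Tinf * \<rho>s = pinf + 2 * \<sigma> / Rs"
  shows "\<exists>\<phi>. pi / 2 < \<phi> \<and> \<phi> < pi \<and>
    (\<forall>\<tau>. \<tau> \<notin> bubble_poles (\<kappa> / (cp * \<rho>s * Rs ^ 2)) \<and>
          bubbleQ Rg Tinf \<gamma> (\<kappa> / (cp * \<rho>s * Rs ^ 2)) \<rho>l \<mu>l \<sigma> Rs \<rho>s \<tau> = 0
          \<longrightarrow> \<phi> \<le> \<bar>Arg \<tau>\<bar> \<and> \<bar>Arg \<tau>\<bar> \<le> pi)"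
proof -
  note hyp = assms
  define kbar where "kbar = \<kappa> / (cp * \<rho>s * Rs ^ 2)"
  define a where "a = pi^2 * kbar"
  define c where "c = 8 * (\<gamma> - 1) / (pi * \<gamma>)"
  define finf where "finf = 4 * pi / (3 * \<gamma>)"
  define A where "A = 4 * pi * \<rho>s / Rs * (Rg * Tinf)"
  define rho where "rho = \<rho>l * Rs"
  define b where "b = 4 * \<mu>l / Rs"
  define d where "d = 2 * \<sigma> / Rs ^ 2"
  define B where "B = pi^2 / 3"
  define M where "M = max 1 ((2*A/finf + b + d)/rho)"
  define \<delta> where "\<delta> = A * c * a / (2 * rho * (a + M)^2 * (finf + c*B)^2)"
  define K where "K = max 1 (M / \<delta>)"
  have cp: "cp > 0" using hyp by simp
  have kbar: "kbar > 0" using hyp cp by (simp add: kbar_def)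
  have a: "a > 0" using kbar by (simp add: a_def)
  have c: "c > 0" using hyp by (simp add: c_def)
  have finf: "finf > 0" using hyp by (simp add: finf_def)
  have finf_eq: "4 * pi / 3 - c * (pi^2/6) = finf"
    using hyp unfolding c_def finf_def by (simp add: field_simps power2_eq_square)
  have A: "A > 0" using hyp by (simp add: A_def)
  have rho: "rho > 0" using hyp by (simp add: rho_def)
  have b: "b \<ge> 0" using hyp by (simp add: b_def)
  have d: "d > 0" using hyp by (simp add: d_def)
  have Ad: "A > 4 * pi / 3 * d"
  proof -
    have "A = 4 * pi * (Rg * Tinf * \<rho>s) / Rs" unfolding A_def by (simp add: field_simps)
    also have "\<dots> = 4 * pi * (pinf + 2 * \<sigma> / Rs) / Rs" using hyp(14) by simp
    also have "\<dots> > 4 * pi * (2 * \<sigma> / Rs) / Rs"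
    proof -
      have "2 * \<sigma> / Rs < pinf + 2 * \<sigma> / Rs" using hyp by simp
      hence "4 * pi * (2 * \<sigma> / Rs) < 4 * pi * (pinf + 2 * \<sigma> / Rs)"
        by (rule mult_strict_left_mono) simp
      thus ?thesis by (rule divide_strict_right_mono) (use hyp in simp)
    qed
    finally have "A > 4 * pi * d" unfolding d_def by (simp add: power2_eq_square)
    moreover have "4 * pi * d > 4 * pi / 3 * d" using d by simp
    ultimately show ?thesis by linarith
  qed
  have M1: "M \<ge> 1" by (simp add: M_def)
  have FUp: "finf + c * B > 0" using finf c by (simp add: B_def add_pos_nonneg)
  have aM: "a + M > 0" using a M1 by simp
  have \<delta>: "\<delta> > 0" unfolding \<delta>_def using A c a rho aM FUp
    by (intro divide_pos_pos mult_pos_pos) auto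
  have K: "K \<ge> 1" by (simp add: K_def)
  have roots: "Re \<tau> < 0 \<and> \<bar>Im \<tau>\<bar> \<le> K * (- Re \<tau>)"
    if Q: "bubbleQ Rg Tinf \<gamma> kbar \<rho>l \<mu>l \<sigma> Rs \<rho>s \<tau> = 0" for \<tau>
  proof (cases "- Re \<tau> \<le> \<bar>Im \<tau>\<bar>")
    case False
    hence "Re \<tau> < 0" by linarith
    moreover have "\<bar>Im \<tau>\<bar> \<le> K * (- Re \<tau>)"
    proof -
      have "1 * (- Re \<tau>) \<le> K * (- Re \<tau>)" using K \<open>Re \<tau> < 0\<close> by (intro mult_right_mono) auto
      thus ?thesis using False by simp
    qed
    ultimately show ?thesis by simp
  next
    case R: True
    define U where "U = suminf (uu a \<tau>)"
    define P where "P = of_real rho * \<tau>^2 + of_real b * \<tau> - of_real d"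
    define F where "F = of_real finf + of_real c * U"
    have S: "bubble_series kbar \<tau> = of_real (pi^2/6) - U"
      unfolding U_def a_def by (rule series_eq[OF kbar R])
    have FF: "of_real (4 * pi / 3) - of_real (8 * (\<gamma> - 1) / (pi * \<gamma>)) * bubble_series kbar \<tau> = F"
    proof -
      have "of_real (4 * pi / 3) - of_real c * (of_real (pi^2/6) - U)
          = (of_real (4 * pi / 3 - c * (pi^2/6)) :: complex) + of_real c * U"
        by (simp add: algebra_simps)
      hence "of_real (4 * pi / 3) - of_real c * bubble_series kbar \<tau> = F"
        unfolding S F_def finf_eq .
      thus ?thesis unfolding c_def .
    qed
    have PP: "of_real (\<rho>l * Rs) * \<tau> ^ 2 + of_real (4 * \<mu>l / Rs) * \<tau> - of_real (2 * \<sigma> / Rs ^ 2) = P"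
      unfolding P_def rho_def b_def d_def by simp
    have Q': "of_real (1 / (Rg * Tinf)) * F * P + of_real (4 * pi * \<rho>s / Rs) = 0"
      using Q unfolding bubbleQ_def FF PP .
    have eq: "F * P = - of_real A"
    proof -
      have RT: "Rg * Tinf \<noteq> 0" using hyp by simp
      have "of_real (Rg * Tinf) * (of_real (1 / (Rg * Tinf)) * F * P + of_real (4 * pi * \<rho>s / Rs)) = 0"
        using Q' by simp
      hence "F * P + of_real A = 0" unfolding A_def using RT
        by (simp add: field_simps)
      thus ?thesis by (simp add: eq_neg_iff_add_eq_0)
    qed
    note Up = U_props[OF a R, folded U_def]
    show ?thesis
    proof (cases "Im \<tau> = 0")
      case y0: True
      hence x0: "Re \<tau> \<ge> 0" using R by simp
      have imU: "Im U = 0" using Up(1) y0 by simp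
      hence reU0: "Re U \<ge> 0" using Up(2) by simp
      have reU1: "Re U \<le> pi^2/6" unfolding U_def by (rule U_real[OF a y0 x0])
      define f where "f = finf + c * Re U"
      have Uf: "U = of_real (Re U)" using imU by (simp add: complex_eq_iff)
      have Ff: "F = of_real f" unfolding F_def f_def by (subst Uf) simp
      have tf: "\<tau> = of_real (Re \<tau>)" using y0 by (simp add: complex_eq_iff)
      define p where "p = rho * (Re \<tau>)^2 + b * Re \<tau> - d"
      have Pp: "P = of_real p" unfolding P_def p_def by (subst (1 2) tf) simp
      have fp: "f * p = - A" using eq unfolding Ff Pp by (metis of_real_minus of_real_mult of_real_eq_iff)
      have f0: "f > 0" using finf c reU0 by (simp add: f_def add_pos_nonneg)
      have f1: "f \<le> 4 * pi / 3"
      proof -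
        have "c * Re U \<le> c * (pi^2/6)" using reU1 c by simp
        thus ?thesis using finf_eq by (simp add: f_def)
      qed
      have p0: "p \<ge> - d" using x0 rho b by (simp add: p_def)
      have "f * p \<ge> f * (- d)" using p0 f0 by (intro mult_left_mono) auto
      moreover have "f * d \<le> 4 * pi / 3 * d" using f1 d by (intro mult_right_mono) auto
      ultimately have "- A \<ge> - (4 * pi / 3 * d)" using fp by simp
      thus ?thesis using Ad by simp
    next
      case y0: False
      have cr: "Re \<tau> \<le> - \<delta> \<and> cmod \<tau> \<le> M"
        unfolding \<delta>_def M_def
        by (rule core[OF F_def finf c rho b d A a eq[unfolded P_def] Up(2) Up(3)[folded B_def] Up(1) Up(4) y0])
      have "\<bar>Im \<tau>\<bar> \<le> M" using cr abs_Im_le_cmod[of \<tau>] by linarith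
      also have "M = (M / \<delta>) * \<delta>" using \<delta> by simp
      also have "\<dots> \<le> K * (- Re \<tau>)"
        using cr \<delta> M1 by (intro mult_mono) (auto simp: K_def)
      finally show ?thesis using cr \<delta> by simp
    qed
  qed
  show ?thesis
  proof (intro exI[of _ "pi - arctan K"] conjI allI impI)
    have "arctan K < pi/2" by (rule arctan_ubound)
    thus "pi / 2 < pi - arctan K" by simp
    show "pi - arctan K < pi" using K by simp
  next
    fix \<tau>
    assume "\<tau> \<notin> bubble_poles (\<kappa> / (cp * \<rho>s * Rs ^ 2)) \<and>
          bubbleQ Rg Tinf \<gamma> (\<kappa> / (cp * \<rho>s * Rs ^ 2)) \<rho>l \<mu>l \<sigma> Rs \<rho>s \<tau> = 0"
    hence "bubbleQ Rg Tinf \<gamma> kbar \<rho>l \<mu>l \<sigma> Rs \<rho>s \<tau> = 0" by (simp add: kbar_def)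
    from roots[OF this] have r: "Re \<tau> < 0" "\<bar>Im \<tau>\<bar> \<le> K * (- Re \<tau>)" by auto
    show "pi - arctan K \<le> \<bar>Arg \<tau>\<bar>" using arg_bound[OF _ r] K by simp
    show "\<bar>Arg \<tau>\<bar> \<le> pi" using Arg_bounded[of \<tau>] by linarith
  qed
qed

end
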